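(* Let $G=(V,E)$ be a finite simple graph of order $n$ and let $T=n-1$. If $(x,y,z)$ is an optimal solution of the Time Step Model $\mathrm{TSM}(G,T)$ (minimizing $\sum_{v\in V}x^0_v$), then $C=\{v\in V\colon x^0_v=1\}$ is a minimum zero forcing set of $G$.
   Context: Zero forcing: under the standard color change rule a filled vertex $u$ can force a non-filled vertex $v$ if $v$ is the only non-filled neighbor of $u$; $C\subseteq V$ is a zero forcing set if, starting with $C$ filled and repeatedly forcing, all of $V$ becomes filled. A minimum zero forcing set is a zero forcing set of minimum size. $N(u)$ is the neighborhood of $u$ and $d(u)=|N(u)|$. Time Step Model: $A$ is the set of arcs containing $(u,v)$ and $(v,u)$ for each edge $\{u,v\}$, $[T]=\{1,\dots,T\}$. $\mathrm{TSM}(G,T)$ has binary variables $x^t_v$ ($v\in V$, $t\in\{0,\dots,T\}$), $y^t_a$ ($a\in A$, $t\in[T]$), $z^t$ ($t\in[T]$), with constraints: (1) $x^0_v+\sum_{t\in[T]}\sum_{a=(u,v)\in A}y^t_a=1$ for all $v$; (2) $y^t_a\leq x^{t-1}_u$ for all $a=(u,v)\in A$, $t\in[T]$; (3) $y^t_a\leq x^{t-1}_w$ for all $a=(u,v)\in A$, $w\in N(u)\setminus\{v\}$, $t\in[T]$; (4) $x^t_v=x^{t-1}_v+\sum_{a=(u,v)\in A}y^t_a$ for all $v$, $t\in[T]$; (5) $x^{t-1}_u-x^{t-1}_v+\sum_{w\in N(u)\setminus\{v\}}x^{t-1}_w\leq\sum_{a=(w,v)\in A}y^t_a+d(u)-1$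 for all $(u,v)\in A$, $t\in[T]$; (6) $\frac1n\sum_{v\in V}(x^t_v-x^{t-1}_v)-z^t\leq0$ for all $t\in[T]$; (7) $z^t-\sum_{v\in V}(x^t_v-x^{t-1}_v)\leq 0$ for all $t\in[T]$. Objective: minimize $\sum_{v\in V}x^0_v$. *)

theory Defs
  imports Complex_Main
begin

definition simple_graph :: "'a set \<Rightarrow> ('a \<Rightarrow> 'a \<Rightarrow> bool) \<Rightarrow> bool" where
  "simple_graph V E \<longleftrightarrow> finite V \<and> (\<forall>u v. E u v \<longrightarrow> u \<in> V \<and> v \<in> V) \<and>
     (\<forall>u v. E u v \<longrightarrow> E v u) \<and> (\<forall>u. \<not> E u u)"

definition nbhd :: "'a set \<Rightarrow> ('a \<Rightarrow> 'a \<Rightarrow> bool) \<Rightarrow> 'a \<Rightarrow> 'a set" where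
  "nbhd V E u = {w \<in> V. E u w}"

definition deg :: "'a set \<Rightarrow> ('a \<Rightarrow> 'a \<Rightarrow> bool) \<Rightarrow> 'a \<Rightarrow> nat" where
  "deg V E u = card (nbhd V E u)"

definition arcs :: "'a set \<Rightarrow> ('a \<Rightarrow> 'a \<Rightarrow> bool) \<Rightarrow> ('a \<times> 'a) set" where
  "arcs V E = {(u, v). u \<in> V \<and> v \<in> V \<and> E u v}"

(* Least set closed under forcing (the requirement that v is not yet filled is
   irrelevant for the closure). Set of vertices filled by repeatedly applying the standard colour change rule from C *)
inductive_set filled :: "'a set \<Rightarrow> ('a \<Rightarrow> 'a \<Rightarrow> bool) \<Rightarrow> 'a set \<Rightarrow> 'a set"
  for V E C where
  init: "c \<in> C \<Longrightarrow> c \<in> filled V E C"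
| force: "\<lbrakk> u \<in> filled V E C; v \<in> nbhd V E u;
            \<forall>w. w \<in> nbhd V E u \<and> w \<noteq> v \<longrightarrow> w \<in> filled V E C \<rbrakk> \<Longrightarrow> v \<in> filled V E C"

definition zero_forcing_set :: "'a set \<Rightarrow> ('a \<Rightarrow> 'a \<Rightarrow> bool) \<Rightarrow> 'a set \<Rightarrow> bool" where
  "zero_forcing_set V E C \<longleftrightarrow> C \<subseteq> V \<and> V \<subseteq> filled V E C"

definition min_zero_forcing_set :: "'a set \<Rightarrow> ('a \<Rightarrow> 'a \<Rightarrow> bool) \<Rightarrow> 'a set \<Rightarrow> bool" where
  "min_zero_forcing_set V E C \<longleftrightarrow> zero_forcing_set V E C \<and>
     (\<forall>C'. zero_forcing_set V E C' \<longrightarrow> card C \<le> card C')"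

definition binary :: "real \<Rightarrow> bool" where
  "binary r \<longleftrightarrow> r = 0 \<or> r = 1"

definition tsm_feasible :: "'a set \<Rightarrow> ('a \<Rightarrow> 'a \<Rightarrow> bool) \<Rightarrow> nat \<Rightarrow>
    ('a \<Rightarrow> nat \<Rightarrow> real) \<Rightarrow> ('a \<times> 'a \<Rightarrow> nat \<Rightarrow> real) \<Rightarrow> (nat \<Rightarrow> real) \<Rightarrow> bool" where
  "tsm_feasible V E T x y z \<longleftrightarrow>
     (\<forall>v\<in>V. \<forall>t\<in>{0..T}. binary (x v t)) \<and>
     (\<forall>a\<in>arcs V E. \<forall>t\<in>{1..T}. binary (y a t)) \<and>
     (\<forall>t\<in>{1..T}. binary (z t)) \<and>
     \<comment> \<open>(1)\<close>
     (\<forall>v\<in>V. x v 0 + (\<Sum>t\<in>{1..T}. \<Sum>a\<in>{a \<in> arcs V E. snd a = v}. y a t) = 1) \<and>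
     \<comment> \<open>(2)\<close>
     (\<forall>(u,v)\<in>arcs V E. \<forall>t\<in>{1..T}. y (u,v) t \<le> x u (t - 1)) \<and>
     \<comment> \<open>(3)\<close>
     (\<forall>(u,v)\<in>arcs V E. \<forall>w\<in>nbhd V E u - {v}. \<forall>t\<in>{1..T}. y (u,v) t \<le> x w (t - 1)) \<and>
     \<comment> \<open>(4)\<close>
     (\<forall>v\<in>V. \<forall>t\<in>{1..T}. x v t = x v (t - 1) + (\<Sum>a\<in>{a \<in> arcs V E. snd a = v}. y a t)) \<and>
     \<comment> \<open>(5)\<close>
     (\<forall>(u,v)\<in>arcs V E. \<forall>t\<in>{1..T}.
        x u (t - 1) - x v (t - 1) + (\<Sum>w\<in>nbhd V E u - {v}. x w (t - 1))
          \<le> (\<Sum>a\<in>{a \<in> arcs V E. snd a = v}. y a t) + real (deg V E u) - 1) \<and>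
     \<comment> \<open>(6)\<close>
     (\<forall>t\<in>{1..T}. (1 / real (card V)) * (\<Sum>v\<in>V. x v t - x v (t - 1)) - z t \<le> 0) \<and>
     \<comment> \<open>(7)\<close>
     (\<forall>t\<in>{1..T}. z t - (\<Sum>v\<in>V. x v t - x v (t - 1)) \<le> 0)"

definition tsm_objective :: "'a set \<Rightarrow> ('a \<Rightarrow> nat \<Rightarrow> real) \<Rightarrow> real" where
  "tsm_objective V x = (\<Sum>v\<in>V. x v 0)"

definition tsm_optimal :: "'a set \<Rightarrow> ('a \<Rightarrow> 'a \<Rightarrow> bool) \<Rightarrow> nat \<Rightarrow>
    ('a \<Rightarrow> nat \<Rightarrow> real) \<Rightarrow> ('a \<times> 'a \<Rightarrow> nat \<Rightarrow> real) \<Rightarrow> (nat \<Rightarrow> real) \<Rightarrow> bool" where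
  "tsm_optimal V E T x y z \<longleftrightarrow> tsm_feasible V E T x y z \<and>
     (\<forall>x' y' z'. tsm_feasible V E T x' y' z' \<longrightarrow> tsm_objective V x \<le> tsm_objective V x')"

end

theory Submission
  imports Defs
begin

lemma binary_cases: "binary r \<Longrightarrow> r = 0 \<or> r = 1"
  by (simp add: binary_def)

lemma sum_ind_card:
  assumes "finite A"
  shows "(\<Sum>a\<in>A. if P a then 1 else 0 :: real) = real (card {a\<in>A. P a})"
proof -
  have "(\<Sum>a\<in>A. if P a then 1 else 0 :: real) = (\<Sum>a\<in>{a\<in>A. P a}. 1)"
    using sum.inter_filter[OF assms, of "\<lambda>_. 1::real" P] by simp
  then show ?thesis by simp
qed

lemma feasible_zfs:
  assumes g: "simple_graph V E" and f: "tsm_feasible V E T x y z"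
  shows "zero_forcing_set V E {v\<in>V. x v 0 = 1}"
proof -
  let ?C = "{v\<in>V. x v 0 = 1}"
  let ?S = "\<lambda>v t. (\<Sum>a\<in>{a \<in> arcs V E. snd a = v}. y a t)"
  have finA: "finite (arcs V E)"
  proof -
    have "arcs V E \<subseteq> V \<times> V" by (auto simp: arcs_def)
    moreover have "finite V" using g by (simp add: simple_graph_def)
    ultimately show ?thesis by (meson finite_SigmaI finite_subset)
  qed
  have bx: "\<And>v t. v \<in> V \<Longrightarrow> t \<le> T \<Longrightarrow> x v t = 0 \<or> x v t = 1"
    using f by (auto simp: tsm_feasible_def binary_def)
  have by': "\<And>a t. a \<in> arcs V E \<Longrightarrow> 1 \<le> t \<Longrightarrow> t \<le> T \<Longrightarrow> y a t = 0 \<or> y a t = 1"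
    using f by (auto simp: tsm_feasible_def binary_def)
  have c1: "\<And>v. v\<in>V \<Longrightarrow> x v 0 + (\<Sum>t\<in>{1..T}. ?S v t) = 1"
    using f by (simp add: tsm_feasible_def)
  have c2a: "\<forall>(u,v)\<in>arcs V E. \<forall>t\<in>{1..T}. y (u,v) t \<le> x u (t - 1)"
    using f unfolding tsm_feasible_def by (elim conjE) assumption
  have c2: "\<And>u v t. (u,v) \<in> arcs V E \<Longrightarrow> t \<in> {1..T} \<Longrightarrow> y (u,v) t \<le> x u (t - 1)"
    using c2a by blast
  have c3a: "\<forall>(u,v)\<in>arcs V E. \<forall>w\<in>nbhd V E u - {v}. \<forall>t\<in>{1..T}. y (u,v) t \<le> x w (t - 1)"
    using f unfolding tsm_feasible_def by (elim conjE) assumption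
  have c3: "\<And>u v w t. (u,v) \<in> arcs V E \<Longrightarrow> w \<in> nbhd V E u - {v} \<Longrightarrow> t \<in> {1..T} \<Longrightarrow> y (u,v) t \<le> x w (t - 1)"
    using c3a by blast
  have c4a: "\<forall>v\<in>V. \<forall>t\<in>{1..T}. x v t = x v (t - 1) + ?S v t"
    using f unfolding tsm_feasible_def by (elim conjE) assumption
  have c4: "\<And>v t. v\<in>V \<Longrightarrow> t \<in> {1..T} \<Longrightarrow> x v t = x v (t - 1) + ?S v t"
    using c4a by blast
  have Snn: "\<And>v t. 1 \<le> t \<Longrightarrow> t \<le> T \<Longrightarrow> 0 \<le> ?S v t"
    by (rule sum_nonneg) (use by' in force)
  have key: "\<And>v. v \<in> V \<Longrightarrow> x v t = 1 \<Longrightarrow> t \<le> T \<Longrightarrow> v \<in> filled V E ?C" for t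
  proof (induction t)
    case 0
    then show ?case by (auto intro: filled.init)
  next
    case (Suc t)
    have e4: "x v (Suc t) = x v t + ?S v (Suc t)" using c4[of v "Suc t"] Suc.prems by simp
    show ?case
    proof (cases "x v t = 1")
      case True
      then show ?thesis using Suc by simp
    next
      case False
      then have "x v t = 0" using bx[of v t] Suc.prems by simp
      then have "?S v (Suc t) \<noteq> 0" using e4 Suc.prems by simp
      then have "\<exists>a\<in>{a \<in> arcs V E. snd a = v}. y a (Suc t) \<noteq> 0"
      proof (rule contrapos_np)
        assume "\<not> (\<exists>a\<in>{a \<in> arcs V E. snd a = v}. y a (Suc t) \<noteq> 0)"
        then show "?S v (Suc t) = 0" by (intro sum.neutral) simp
      qed
      then obtain a where a: "a \<in> arcs V E" "snd a = v" "y a (Suc t) \<noteq> 0"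
        by auto
      obtain u where au: "a = (u, v)" using a by (cases a) auto
      have ya: "y a (Suc t) = 1" using by'[of a "Suc t"] a Suc.prems by auto
      have uV: "u \<in> V" and vN: "v \<in> nbhd V E u" using a au by (auto simp: arcs_def nbhd_def)
      have "x u t \<ge> 1" using c2[of u v "Suc t"] a au ya Suc.prems by simp
      then have "x u t = 1" using bx[of u t] uV Suc.prems by auto
      then have uf: "u \<in> filled V E ?C" using Suc.IH[of u] uV Suc.prems by simp
      have wf: "\<forall>w. w \<in> nbhd V E u \<and> w \<noteq> v \<longrightarrow> w \<in> filled V E ?C"
      proof (intro allI impI)
        fix w assume w: "w \<in> nbhd V E u \<and> w \<noteq> v"
        then have wV: "w \<in> V" by (simp add: nbhd_def)
        have "x w t \<ge> 1" using c3[of u v w "Suc t"] a au ya Suc.prems w by simp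
        then have "x w t = 1" using bx[of w t] wV Suc.prems by auto
        then show "w \<in> filled V E ?C" using Suc.IH[of w] wV Suc.prems by simp
      qed
      show ?thesis by (rule filled.force[OF uf vN wf])
    qed
  qed
  have "V \<subseteq> filled V E ?C"
  proof
    fix v assume vV: "v \<in> V"
    show "v \<in> filled V E ?C"
    proof (cases "x v 0 = 1")
      case True then show ?thesis using vV by (auto intro: filled.init)
    next
      case False
      then have "x v 0 = 0" using bx[of v 0] vV by simp
      then have "(\<Sum>t\<in>{1..T}. ?S v t) \<noteq> 0" using c1[OF vV] by simp
      then have "\<exists>t\<in>{1..T}. ?S v t \<noteq> 0"
      proof (rule contrapos_np)
        assume "\<not> (\<exists>t\<in>{1..T}. ?S v t \<noteq> 0)"
        then show "(\<Sum>t\<in>{1..T}. ?S v t) = 0" by (intro sum.neutral) simp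
      qed
      then obtain t where t: "t \<in> {1..T}" "?S v t \<noteq> 0" by auto
      from t(2) have "\<exists>a\<in>{a \<in> arcs V E. snd a = v}. y a t \<noteq> 0"
      proof (rule contrapos_np)
        assume "\<not> (\<exists>a\<in>{a \<in> arcs V E. snd a = v}. y a t \<noteq> 0)"
        then show "?S v t = 0" by (intro sum.neutral) simp
      qed
      then obtain a where a: "a \<in> arcs V E" "snd a = v" "y a t \<noteq> 0"
        by auto
      have ya: "y a t = 1" using by'[of a t] a t by auto
      have "y a t \<le> ?S v t"
        by (rule member_le_sum) (use a finA t in \<open>auto dest: by'[of _ t]\<close>)
      moreover have "x v (t-1) \<ge> 0" using bx[of v "t-1"] vV t by force
      ultimately have "x v t \<ge> 1" using c4[OF vV t(1)] ya by linarith
      then have "x v t = 1" using bx[of v t] vV t by auto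
      then show ?thesis using key[OF vV] t by simp
    qed
  qed
  then show ?thesis by (simp add: zero_forcing_set_def)
qed

fun pfill :: "'a set \<Rightarrow> ('a \<Rightarrow> 'a \<Rightarrow> bool) \<Rightarrow> 'a set \<Rightarrow> nat \<Rightarrow> 'a set" where
  "pfill V E C 0 = C"
| "pfill V E C (Suc t) = pfill V E C t \<union>
     {v. \<exists>u\<in>pfill V E C t. v \<in> nbhd V E u \<and> nbhd V E u - {v} \<subseteq> pfill V E C t}"

lemma pfill_mono_Suc: "pfill V E C t \<subseteq> pfill V E C (Suc t)"
  by auto

lemma pfill_mono: "s \<le> t \<Longrightarrow> pfill V E C s \<subseteq> pfill V E C t"
  by (rule lift_Suc_mono_le[of "pfill V E C"]) (auto)

lemma pfill_sub: "C \<subseteq> V \<Longrightarrow> pfill V E C t \<subseteq> V"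
  by (induction t) (auto simp: nbhd_def)

lemma pfill_stable:
  assumes "pfill V E C (Suc k) = pfill V E C k"
  shows "pfill V E C (k + m) = pfill V E C k"
proof (induction m)
  case 0 then show ?case by simp
next
  case (Suc m)
  have "pfill V E C (k + Suc m) = pfill V E C (Suc (k + m))" by simp
  also have "\<dots> = pfill V E C (Suc k)" by (simp only: pfill.simps Suc)
  finally show ?case using assms by simp
qed

lemma pfill_grow:
  assumes "finite V" "C \<subseteq> V"
  shows "(\<forall>s<t. pfill V E C s \<noteq> pfill V E C (Suc s)) \<Longrightarrow> card C + t \<le> card (pfill V E C t)"
proof (induction t)
  case 0 then show ?case by simp
next
  case (Suc t)
  have "card C + t \<le> card (pfill V E C t)" using Suc by simp
  moreover have "pfill V E C t \<subset> pfill V E C (Suc t)"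
    using Suc.prems pfill_mono_Suc[of V E C t] by auto
  moreover have "finite (pfill V E C (Suc t))"
    using pfill_sub[OF assms(2)] assms(1) finite_subset by blast
  ultimately have "card (pfill V E C t) < card (pfill V E C (Suc t))"
    using psubset_card_mono by blast
  with \<open>card C + t \<le> card (pfill V E C t)\<close> show ?case by simp
qed

lemma pfill_closed:
  assumes "finite V" "C \<subseteq> V" "C \<noteq> {}" "T = card V - 1"
  shows "pfill V E C (Suc T) = pfill V E C T"
proof (rule ccontr)
  assume ne: "pfill V E C (Suc T) \<noteq> pfill V E C T"
  have "\<forall>s<Suc T. pfill V E C s \<noteq> pfill V E C (Suc s)"
  proof (intro allI impI)
    fix s assume "s < Suc T"
    show "pfill V E C s \<noteq> pfill V E C (Suc s)"
    proof
      assume eq: "pfill V E C s = pfill V E C (Suc s)"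
      have e1: "s + (T - s) = T" and e2: "s + (Suc T - s) = Suc T" using \<open>s < Suc T\<close> by auto
      have "pfill V E C (s + (T - s)) = pfill V E C s" by (rule pfill_stable[OF eq[symmetric]])
      moreover have "pfill V E C (s + (Suc T - s)) = pfill V E C s" by (rule pfill_stable[OF eq[symmetric]])
      ultimately show False using ne unfolding e1 e2 by simp
    qed
  qed
  then have "card C + Suc T \<le> card (pfill V E C (Suc T))" using pfill_grow[OF assms(1,2)] by blast
  moreover have "card (pfill V E C (Suc T)) \<le> card V"
    using pfill_sub[OF assms(2)] assms(1) card_mono by blast
  moreover have "card C \<ge> 1" using assms(1,2,3)
    by (metis One_nat_def Suc_leI card_gt_0_iff finite_subset)
  ultimately show False using assms(4) by linarith
qed

lemma filled_sub_pfill: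
  assumes "pfill V E C (Suc T) = pfill V E C T"
  shows "filled V E C \<subseteq> pfill V E C T"
proof
  fix v assume "v \<in> filled V E C"
  then show "v \<in> pfill V E C T"
  proof (induction rule: filled.induct)
    case (init c)
    then show ?case using pfill_mono[of 0 T V E C] by auto
  next
    case (force u v)
    then have "v \<in> pfill V E C (Suc T)" by auto
    then show ?case using assms by metis
  qed
qed

lemma filled_empty: "filled V E {} = {}"
proof -
  have "v \<in> filled V E {} \<Longrightarrow> False" for v
    by (induction rule: filled.induct) auto
  then show ?thesis by blast
qed

lemma chain_sum:
  assumes "\<And>t. P t \<subseteq> P (Suc t)"
  shows "(if v \<in> P 0 then 1 else 0) + (\<Sum>t\<in>{1..T}. if v \<in> P t - P (t - 1) then 1 else 0)
         = (if v \<in> P T then (1::real) else 0)"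
proof (induction T)
  case 0 then show ?case by simp
next
  case (Suc T)
  have "(\<Sum>t\<in>{1..Suc T}. if v \<in> P t - P (t - 1) then 1 else (0::real))
     = (\<Sum>t\<in>{1..T}. if v \<in> P t - P (t - 1) then 1 else 0) + (if v \<in> P (Suc T) - P T then 1 else 0)"
    by (simp add: sum.cl_ivl_Suc)
  then show ?case using Suc assms[of T] by auto
qed

lemma finite_arcs: "finite V \<Longrightarrow> finite (arcs V E)"
proof -
  assume "finite V"
  moreover have "arcs V E \<subseteq> V \<times> V" by (auto simp: arcs_def)
  ultimately show ?thesis by (meson finite_SigmaI finite_subset)
qed

lemma zfs_feasible:
  assumes g: "simple_graph V E" and zc: "zero_forcing_set V E C" and TT: "T = card V - 1"
  shows "\<exists>x y z. tsm_feasible V E T x y z \<and> tsm_objective V x = real (card C)"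
proof -
  have finV: "finite V" using g by (simp add: simple_graph_def)
  have CV: "C \<subseteq> V" and VF: "V \<subseteq> filled V E C" using zc by (auto simp: zero_forcing_set_def)
  define F where "F = pfill V E C"
  have Fmono: "\<And>t. F t \<subseteq> F (Suc t)" unfolding F_def by (rule pfill_mono_Suc)
  have FV: "\<And>t. F t \<subseteq> V" unfolding F_def by (rule pfill_sub[OF CV])
  have VFT: "V \<subseteq> F T"
  proof (cases "V = {}")
    case True then show ?thesis by simp
  next
    case False
    have Cne: "C \<noteq> {}"
    proof
      assume "C = {}"
      then have "V \<subseteq> {}" using VF filled_empty[of V E] by simp
      with False show False by simp
    qed
    have "pfill V E C (Suc T) = pfill V E C T" by (rule pfill_closed[OF finV CV Cne TT])
    then have "filled V E C \<subseteq> pfill V E C T" by (rule filled_sub_pfill)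
    with VF show ?thesis unfolding F_def by (rule subset_trans)
  qed
  define New where "New t = F t - F (t - 1)" for t
  define frc where "frc v t = (SOME u. u \<in> F (t - 1) \<and> v \<in> nbhd V E u \<and> nbhd V E u - {v} \<subseteq> F (t - 1))" for v t
  have frcP: "frc v t \<in> F (t - 1) \<and> v \<in> nbhd V E (frc v t) \<and> nbhd V E (frc v t) - {v} \<subseteq> F (t - 1)"
    if "1 \<le> t" "v \<in> New t" for v t
  proof -
    have "F t = F (Suc (t - 1))" using that by simp
    then have "\<exists>u. u \<in> F (t - 1) \<and> v \<in> nbhd V E u \<and> nbhd V E u - {v} \<subseteq> F (t - 1)"
      using that(2) unfolding New_def F_def by auto
    then show ?thesis unfolding frc_def by (rule someI_ex)
  qed
  define x where "x v t = (if v \<in> F t then 1 else (0::real))" for v t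
  define y where "y a t = (if snd a \<in> New t \<and> fst a = frc (snd a) t then 1 else (0::real))" for a t
  define z where "z t = (if New t \<noteq> {} then 1 else (0::real))" for t
  have finA: "finite (arcs V E)" using finite_arcs[OF finV] .
  have Ssum: "(\<Sum>a\<in>{a \<in> arcs V E. snd a = v}. y a t) = (if v \<in> New t then 1 else 0)"
    if "1 \<le> t" for v t
  proof (cases "v \<in> New t")
    case True
    have P: "frc v t \<in> F (t - 1)" "v \<in> nbhd V E (frc v t)" using frcP[OF that True] by auto
    have pin: "(frc v t, v) \<in> {a \<in> arcs V E. snd a = v}"
      using P FV by (auto simp: arcs_def nbhd_def)
    have "(\<Sum>a\<in>{a \<in> arcs V E. snd a = v}. y a t) = (\<Sum>a\<in>{a \<in> arcs V E. snd a = v}. if a = (frc v t, v) then 1 else 0)"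
      by (rule sum.cong) (auto simp: y_def True)
    also have "\<dots> = 1" using pin finA by (simp add: sum.delta)
    finally show ?thesis using True by simp
  next
    case False
    have "(\<Sum>a\<in>{a \<in> arcs V E. snd a = v}. y a t) = 0"
      by (rule sum.neutral) (auto simp: y_def False)
    then show ?thesis using False by simp
  qed
  have dsum: "(\<Sum>v\<in>V. x v t - x v (t - 1)) = real (card (New t))" for t
  proof -
    have m: "F (t - 1) \<subseteq> F t"
      by (cases t) (auto simp: Fmono)
    have "(\<Sum>v\<in>V. x v t - x v (t - 1)) = (\<Sum>v\<in>V. if v \<in> New t then 1 else 0)"
      by (rule sum.cong) (use m in \<open>auto simp: x_def New_def\<close>)
    also have "\<dots> = real (card {v \<in> V. v \<in> New t})" by (rule sum_ind_card[OF finV])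
    also have "{v \<in> V. v \<in> New t} = New t" using FV by (auto simp: New_def)
    finally show ?thesis .
  qed
  have h0: "\<forall>v\<in>V. \<forall>t\<in>{0..T}. binary (x v t)" by (simp add: x_def binary_def)
  have h0b: "\<forall>a\<in>arcs V E. \<forall>t\<in>{1..T}. binary (y a t)" by (simp add: y_def binary_def)
  have h0c: "\<forall>t\<in>{1..T}. binary (z t)" by (simp add: z_def binary_def)
  have h1: "\<forall>v\<in>V. x v 0 + (\<Sum>t\<in>{1..T}. \<Sum>a\<in>{a \<in> arcs V E. snd a = v}. y a t) = 1"
  proof
    fix v assume vV: "v \<in> V"
    have "(\<Sum>t\<in>{1..T}. \<Sum>a\<in>{a \<in> arcs V E. snd a = v}. y a t) = (\<Sum>t\<in>{1..T}. if v \<in> F t - F (t - 1) then 1 else 0)"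
      by (rule sum.cong) (auto simp: Ssum New_def)
    then show "x v 0 + (\<Sum>t\<in>{1..T}. \<Sum>a\<in>{a \<in> arcs V E. snd a = v}. y a t) = 1"
      using chain_sum[of F v T, OF Fmono] VFT vV by (auto simp: x_def)
  qed
  have h2: "\<forall>(u,v)\<in>arcs V E. \<forall>t\<in>{1..T}. y (u,v) t \<le> x u (t - 1)"
    using frcP by (auto simp: y_def x_def)
  have h3: "\<forall>(u,v)\<in>arcs V E. \<forall>w\<in>nbhd V E u - {v}. \<forall>t\<in>{1..T}. y (u,v) t \<le> x w (t - 1)"
  proof (intro ballI, clarify)
    fix u v w t assume a: "(u, v) \<in> arcs V E" "t \<in> {1..T}" "w \<in> nbhd V E u" "w \<noteq> v"
    show "y (u, v) t \<le> x w (t - 1)"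
    proof (cases "v \<in> New t \<and> u = frc v t")
      case True
      then have "w \<in> F (t - 1)" using frcP[of t v] a by auto
      then show ?thesis by (simp add: x_def y_def)
    next
      case False then show ?thesis by (auto simp: x_def y_def)
    qed
  qed
  have h4: "\<forall>v\<in>V. \<forall>t\<in>{1..T}. x v t = x v (t - 1) + (\<Sum>a\<in>{a \<in> arcs V E. snd a = v}. y a t)"
  proof (intro ballI)
    fix v t assume "v \<in> V" "t \<in> {1..T}"
    then have "1 \<le> t" by simp
    have m: "F (t - 1) \<subseteq> F t" using Fmono[of "t - 1"] \<open>1 \<le> t\<close> by simp
    show "x v t = x v (t - 1) + (\<Sum>a\<in>{a \<in> arcs V E. snd a = v}. y a t)"
      unfolding Ssum[OF \<open>1 \<le> t\<close>] x_def New_def using m by auto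
  qed
  have h5: "\<forall>(u,v)\<in>arcs V E. \<forall>t\<in>{1..T}.
        x u (t - 1) - x v (t - 1) + (\<Sum>w\<in>nbhd V E u - {v}. x w (t - 1))
          \<le> (\<Sum>a\<in>{a \<in> arcs V E. snd a = v}. y a t) + real (deg V E u) - 1"
  proof (intro ballI, clarify)
    fix u v t assume a: "(u, v) \<in> arcs V E" "t \<in> {1..T}"
    then have t1: "1 \<le> t" by simp
    define s where "s = t - 1"
    have ts: "t = Suc s" using t1 by (simp add: s_def)
    define A where "A = nbhd V E u - {v}"
    have vN: "v \<in> nbhd V E u" using a by (simp add: arcs_def nbhd_def)
    have finN: "finite (nbhd V E u)" using finV by (simp add: nbhd_def)
    have finAA: "finite A" using finN by (simp add: A_def)
    have cA: "real (card A) = real (deg V E u) - 1"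
    proof -
      have "card A = card (nbhd V E u) - 1" unfolding A_def using vN finN by (simp add: card_Diff_singleton)
      moreover have "card (nbhd V E u) \<ge> 1" using vN finN
        by (metis One_nat_def Suc_leI card_gt_0_iff empty_iff)
      ultimately show ?thesis by (simp add: deg_def of_nat_diff)
    qed
    define K where "K = card {w \<in> A. w \<in> F s}"
    have sumK: "(\<Sum>w\<in>A. x w s) = real K"
      unfolding K_def x_def by (rule sum_ind_card[OF finAA])
    have KA: "K \<le> card A" unfolding K_def using finAA by (intro card_mono) auto
    have xu: "x u s \<le> 1" and xv: "0 \<le> x v s" by (auto simp: x_def)
    have "x u s - x v s + real K \<le> (if v \<in> New t then 1 else 0) + real (deg V E u) - 1"
    proof (cases "v \<in> New t")
      case True then show ?thesis using xu xv KA cA by simp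
    next
      case nN: False
      show ?thesis
      proof (cases "v \<in> F s")
        case True
        then have "x v s = 1" by (simp add: x_def)
        then show ?thesis using xu KA cA nN by simp
      next
        case False
        then have "v \<notin> F (Suc s)" using nN by (simp add: New_def ts)
        then have nc: "\<not> (u \<in> F s \<and> A \<subseteq> F s)" using vN by (auto simp: F_def A_def)
        show ?thesis
        proof (cases "u \<in> F s")
          case True
          then have "\<not> A \<subseteq> F s" using nc by simp
          then have "{w \<in> A. w \<in> F s} \<subset> A" by auto
          then have "K < card A" unfolding K_def using finAA psubset_card_mono by blast
          then show ?thesis using xv nN cA by (simp add: x_def)
        next
          case uF: False
          then have "x u s = 0" by (simp add: x_def)
          then show ?thesis using xv KA cA nN by simp
        qed
      qed
    qed
    then show "x u (t - 1) - x v (t - 1) + (\<Sum>w\<in>nbhd V E u - {v}. x w (t - 1))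
          \<le> (\<Sum>a\<in>{a \<in> arcs V E. snd a = v}. y a t) + real (deg V E u) - 1"
      using sumK Ssum[OF t1] by (simp add: s_def A_def)
  qed
  have h6: "\<forall>t\<in>{1..T}. (1 / real (card V)) * (\<Sum>v\<in>V. x v t - x v (t - 1)) - z t \<le> 0"
  proof
    fix t assume "t \<in> {1..T}"
    show "(1 / real (card V)) * (\<Sum>v\<in>V. x v t - x v (t - 1)) - z t \<le> 0"
    proof (cases "New t = {}")
      case True then show ?thesis unfolding dsum z_def by simp
    next
      case False
      have "New t \<subseteq> V" using FV by (auto simp: New_def)
      then have le: "card (New t) \<le> card V" using finV card_mono by blast
      have "card (New t) > 0" using False \<open>New t \<subseteq> V\<close> finV
        by (meson card_gt_0_iff finite_subset)
      then have "real (card V) > 0" using le by simp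
      then have "real (card (New t)) / real (card V) \<le> 1" using le by simp
      then show ?thesis using False unfolding dsum z_def by simp
    qed
  qed
  have h7: "\<forall>t\<in>{1..T}. z t - (\<Sum>v\<in>V. x v t - x v (t - 1)) \<le> 0"
  proof
    fix t assume "t \<in> {1..T}"
    show "z t - (\<Sum>v\<in>V. x v t - x v (t - 1)) \<le> 0"
    proof (cases "New t = {}")
      case True then show ?thesis unfolding dsum z_def by simp
    next
      case False
      have "New t \<subseteq> V" using FV by (auto simp: New_def)
      have "card (New t) > 0" using False \<open>New t \<subseteq> V\<close> finV
        by (meson card_gt_0_iff finite_subset)
      then show ?thesis using False unfolding dsum z_def by simp
    qed
  qed
  have feas: "tsm_feasible V E T x y z"
    unfolding tsm_feasible_def by (intro conjI h0 h0b h0c h1 h2 h3 h4 h5 h6 h7)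
  have "tsm_objective V x = (\<Sum>v\<in>V. if v \<in> C then 1 else 0)"
    by (simp add: tsm_objective_def x_def F_def)
  also have "\<dots> = real (card {v \<in> V. v \<in> C})" by (rule sum_ind_card[OF finV])
  also have "{v \<in> V. v \<in> C} = C" using CV by auto
  finally have ob: "tsm_objective V x = real (card C)" .
  show ?thesis by (rule exI[of _ x], rule exI[of _ y], rule exI[of _ z]) (rule conjI[OF feas ob])
qed

theorem corollary4p4:
  fixes V :: "'a set" and E :: "'a \<Rightarrow> 'a \<Rightarrow> bool"
    and x :: "'a \<Rightarrow> nat \<Rightarrow> real" and y :: "'a \<times> 'a \<Rightarrow> nat \<Rightarrow> real" and z :: "nat \<Rightarrow> real"
    and n T :: nat
  assumes "simple_graph V E"
    and "n = card V"
    and "T = n - 1"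
    and "tsm_optimal V E T x y z"
  shows "min_zero_forcing_set V E {v \<in> V. x v 0 = 1}"
proof -
  have feas: "tsm_feasible V E T x y z" using assms(4) by (simp add: tsm_optimal_def)
  have opt: "\<And>x' y' z'. tsm_feasible V E T x' y' z' \<Longrightarrow> tsm_objective V x \<le> tsm_objective V x'"
    using assms(4) unfolding tsm_optimal_def by blast
  have finV: "finite V" using assms(1) by (simp add: simple_graph_def)
  have zfs: "zero_forcing_set V E {v \<in> V. x v 0 = 1}" by (rule feasible_zfs[OF assms(1) feas])
  have bx: "\<And>v. v \<in> V \<Longrightarrow> x v 0 = 0 \<or> x v 0 = 1"
    using feas by (auto simp: tsm_feasible_def binary_def)
  have obj: "tsm_objective V x = real (card {v \<in> V. x v 0 = 1})"
  proof -
    have "tsm_objective V x = (\<Sum>v\<in>V. if x v 0 = 1 then 1 else 0)"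
      unfolding tsm_objective_def by (rule sum.cong) (use bx in auto)
    also have "\<dots> = real (card {v \<in> V. x v 0 = 1})" by (rule sum_ind_card[OF finV])
    finally show ?thesis .
  qed
  have TT: "T = card V - 1" using assms(2,3) by simp
  have "card {v \<in> V. x v 0 = 1} \<le> card C'" if zc: "zero_forcing_set V E C'" for C'
  proof -
    obtain x' y' z' where f': "tsm_feasible V E T x' y' z'" and o': "tsm_objective V x' = real (card C')"
      using zfs_feasible[OF assms(1) zc TT] by blast
    have "real (card {v \<in> V. x v 0 = 1}) \<le> real (card C')" using opt[OF f'] o' obj by simp
    then show ?thesis by simp
  qed
  then show ?thesis using zfs by (simp add: min_zero_forcing_set_def)
qed

end
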